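(* Let $K$ be a finite simplicial complex, $|\cdot|$ a norm on $\mathbb{R}^n$, $f\colon|K|\to\mathbb{R}^n$ a piecewise linear function such that on every simplex of $K$ the function $x\mapsto|f(x)|$ attains both its minimum and its maximum at a vertex, and let $\alpha>0$. Let $\chi\colon|K|\to\mathbb{R}$ be the piecewise linear function with vertex values $\chi(v)=0$ if $|f(v)|<\alpha$, $\chi(v)=1/2$ if $|f(v)|=\alpha$, and $\chi(v)=1$ if $|f(v)|>\alpha$, and put $X:=\chi^{-1}([0,1/2])$ and $A:=\chi^{-1}(\{1/2\})$. Then there exists a continuous extension $F\colon|f|^{-1}([0,\alpha])\to\mathbb{R}^n\setminus\{0\}$ of $f|_{|f|^{-1}(\{\alpha\})}$ if and only if there exists a continuous extension $G\colon X\to\mathbb{R}^n\setminus\{0\}$ of $f|_A$.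
   Context: A function is piecewise linear on $|K|$ if it is affine on each simplex of $K$; $|f|$ denotes $x\mapsto|f(x)|$. *)

theory Defs
  imports "HOL-Analysis.Analysis"
begin

definition is_norm :: "('b::real_vector \<Rightarrow> real) \<Rightarrow> bool" where
  "is_norm N \<longleftrightarrow> (\<forall>x. N x = 0 \<longleftrightarrow> x = 0) \<and>
                  (\<forall>c x. N (c *\<^sub>R x) = \<bar>c\<bar> * N x) \<and>
                  (\<forall>x y. N (x + y) \<le> N x + N y)"

text \<open>Underlying space of a geometric simplicial complex (K is a set of simplices,
  as in the library notion simplicial_complex).\<close>
definition polyhedron :: "'a::euclidean_space set set \<Rightarrow> 'a set" where
  "polyhedron K = \<Union>K"

definition cvertices :: "'a::euclidean_space set set \<Rightarrow> 'a set" where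
  "cvertices K = {v. {v} \<in> K}"

definition piecewise_linear_on :: "'a::euclidean_space set set \<Rightarrow> ('a \<Rightarrow> 'b::real_vector) \<Rightarrow> bool" where
  "piecewise_linear_on K f \<longleftrightarrow>
     (\<forall>S\<in>K. \<exists>h c. linear h \<and> (\<forall>x\<in>S. f x = h x + c))"

end

theory Submission
  imports Defs
begin
lemma isnorm_basics:
  fixes N :: "'b::real_vector \<Rightarrow> real"
  assumes N: "is_norm N"
  shows "N 0 = 0" "\<And>x. N (-x) = N x" "\<And>x. N x \<ge> 0" "\<And>x y. N (x - y) \<ge> N x - N y"
    "\<And>c x. N (c *\<^sub>R x) = \<bar>c\<bar> * N x" "\<And>x y. N (x + y) \<le> N x + N y"
    "\<And>x. N x = 0 \<longleftrightarrow> x = 0"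
proof -
  have h: "\<And>c x. N (c *\<^sub>R x) = \<bar>c\<bar> * N x" "\<And>x y. N (x + y) \<le> N x + N y"
    "\<And>x. N x = 0 \<longleftrightarrow> x = 0"
    using N unfolding is_norm_def by auto
  show "N 0 = 0" using h(3) by simp
  show neg: "N (-x) = N x" for x using h(1)[of "-1" x] by simp
  show "N x \<ge> 0" for x
  proof -
    have "N (x + -x) \<le> N x + N (-x)" by (rule h(2))
    then show ?thesis using neg[of x] h(3)[of 0] by simp
  qed
  show "N (x - y) \<ge> N x - N y" for x y
    using h(2)[of "x - y" y] by simp
  show "N (c *\<^sub>R x) = \<bar>c\<bar> * N x" for c x by (rule h(1))
  show "N (x + y) \<le> N x + N y" for x y by (rule h(2))
  show "N x = 0 \<longleftrightarrow> x = 0" for x by (rule h(3))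
qed

lemma isnorm_sum:
  fixes N :: "'b::real_vector \<Rightarrow> real"
  assumes N: "is_norm N" and "finite A"
  shows "N (\<Sum>i\<in>A. u i) \<le> (\<Sum>i\<in>A. N (u i))"
  using assms(2)
proof (induction A rule: finite_induct)
  case empty then show ?case using isnorm_basics(1)[OF N] by simp
next
  case (insert a A)
  then show ?case using isnorm_basics(6)[OF N, of "u a" "sum u A"] by simp
qed

lemma isnorm_cont:
  fixes N :: "real^'n \<Rightarrow> real"
  assumes N: "is_norm N"
  shows "continuous_on S N"
proof -
  define B where "B = (\<Sum>i\<in>UNIV. N (axis i (1::real)))"
  have B0: "B \<ge> 0" unfolding B_def using isnorm_basics(3)[OF N] by (simp add: sum_nonneg)
  have bound: "N x \<le> B * norm x" for x
  proof -
    have "x = (\<Sum>i\<in>UNIV. (x$i) *\<^sub>R axis i 1)"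
      using basis_expansion[of x] by (simp add: scalar_mult_eq_scaleR)
    then have "N x = N (\<Sum>i\<in>UNIV. (x$i) *\<^sub>R axis i 1)" by simp
    also have "\<dots> \<le> (\<Sum>i\<in>UNIV. N ((x$i) *\<^sub>R axis i 1))" by (rule isnorm_sum[OF N], simp)
    also have "\<dots> = (\<Sum>i\<in>UNIV. \<bar>x$i\<bar> * N (axis i 1))" using isnorm_basics(5)[OF N] by simp
    also have "\<dots> \<le> (\<Sum>i\<in>UNIV. norm x * N (axis i 1))"
      by (rule sum_mono, rule mult_right_mono, simp add: component_le_norm_cart, simp add: isnorm_basics(3)[OF N])
    also have "\<dots> = B * norm x" unfolding B_def by (simp add: sum_distrib_left mult.commute)
    finally show ?thesis .
  qed
  have lip: "\<bar>N x - N y\<bar> \<le> B * norm (x - y)" for x y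
  proof -
    have "N x - N y \<le> N (x - y)" using isnorm_basics(4)[OF N] by simp
    moreover have "N y - N x \<le> N (y - x)" using isnorm_basics(4)[OF N] by simp
    moreover have "N (y - x) = N (x - y)" using isnorm_basics(2)[OF N, of "x - y"] by simp
    ultimately show ?thesis using bound[of "x - y"] by linarith
  qed
  show ?thesis unfolding continuous_on_iff
  proof (intro ballI allI impI)
    fix x e assume "x \<in> S" "(e::real) > 0"
    show "\<exists>d>0. \<forall>x'\<in>S. dist x' x < d \<longrightarrow> dist (N x') (N x) < e"
    proof (intro exI[of _ "e / (B + 1)"] conjI ballI impI)
      show "e / (B + 1) > 0" using \<open>e > 0\<close> B0 by simp
      fix x' assume "x' \<in> S" "dist x' x < e / (B + 1)"
      then have "norm (x' - x) * (B + 1) < e" using B0 by (simp add: dist_norm pos_less_divide_eq)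
      moreover have "dist (N x') (N x) \<le> B * norm (x' - x)" using lip[of x' x] by (simp add: dist_real_def)
      moreover have "B * norm (x' - x) \<le> norm (x' - x) * (B + 1)" by (simp add: algebra_simps)
      ultimately show "dist (N x') (N x) < e" by linarith
    qed
  qed
qed

definition isrep :: "'a::real_vector set \<Rightarrow> ('a \<Rightarrow> real) \<Rightarrow> 'a \<Rightarrow> bool" where
  "isrep C \<mu> x \<longleftrightarrow> (\<forall>w. w \<notin> C \<longrightarrow> \<mu> w = 0) \<and> (\<forall>w\<in>C. 0 \<le> \<mu> w) \<and> sum \<mu> C = 1
      \<and> (\<Sum>w\<in>C. \<mu> w *\<^sub>R w) = x"

lemma aff_unique:
  fixes C :: "'a::real_vector set"
  assumes "finite C" "\<not> affine_dependent C" "sum \<mu> C = 1" "sum \<nu> C = 1"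
    "(\<Sum>w\<in>C. \<mu> w *\<^sub>R w) = (\<Sum>w\<in>C. \<nu> w *\<^sub>R w)"
  shows "\<forall>w\<in>C. \<mu> w = \<nu> w"
proof -
  let ?U = "\<lambda>w. \<mu> w - \<nu> w"
  have "sum ?U C = 0" using assms by (simp add: sum_subtractf)
  moreover have "(\<Sum>w\<in>C. ?U w *\<^sub>R w) = 0" using assms(5)
    by (simp add: scaleR_diff_left sum_subtractf)
  ultimately show ?thesis using assms(2) affine_dependent_explicit_finite[OF assms(1)] by auto
qed

lemma isrep_in_hull:
  assumes "finite C" "isrep C \<mu> x" shows "x \<in> convex hull C"
  using assms unfolding isrep_def convex_hull_finite[OF assms(1)] by blast

lemma rep_exists:
  assumes "finite C" "x \<in> convex hull C" shows "\<exists>\<mu>. isrep C \<mu> x"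
proof -
  obtain u where u: "\<forall>w\<in>C. 0 \<le> u w" "sum u C = 1" "(\<Sum>w\<in>C. u w *\<^sub>R w) = x"
    using assms unfolding convex_hull_finite[OF assms(1)] by blast
  let ?m = "\<lambda>w. if w \<in> C then u w else 0"
  have "isrep C ?m x" unfolding isrep_def using u by (auto intro: sum.cong)
  then show ?thesis by blast
qed

lemma isrep_mono:
  assumes "finite C" "D \<subseteq> C" "isrep D \<mu> x" shows "isrep C \<mu> x"
proof -
  have z: "\<forall>w\<in>C - D. \<mu> w = 0" using assms(3) unfolding isrep_def by auto
  have "sum \<mu> C = sum \<mu> D" by (rule sum.mono_neutral_right[OF assms(1) assms(2)]) (use z in auto)
  moreover have "(\<Sum>w\<in>C. \<mu> w *\<^sub>R w) = (\<Sum>w\<in>D. \<mu> w *\<^sub>R w)"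
    by (rule sum.mono_neutral_right[OF assms(1) assms(2)]) (use z in auto)
  ultimately show ?thesis using assms(2,3) unfolding isrep_def by auto
qed

lemma isrep_unique:
  assumes "finite C" "\<not> affine_dependent C" "isrep C \<mu> x" "isrep C \<nu> x"
  shows "\<mu> = \<nu>"
proof
  fix w show "\<mu> w = \<nu> w"
  proof (cases "w \<in> C")
    case True then show ?thesis using aff_unique[OF assms(1,2), of \<mu> \<nu>] assms(3,4)
      unfolding isrep_def by auto
  next
    case False then show ?thesis using assms(3,4) unfolding isrep_def by auto
  qed
qed

lemma coord_affine:
  fixes C :: "'a::euclidean_space set"
  assumes fC: "finite C" and iC: "\<not> affine_dependent C" and v: "v \<in> C" and c0: "c0 \<in> C" "c0 \<noteq> v"
  obtains g :: "'a \<Rightarrow> real" where "linear g"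
    "\<And>m. sum m C = 1 \<Longrightarrow> m v = g (\<Sum>w\<in>C. m w *\<^sub>R w) - g c0"
proof -
  let ?B = "(\<lambda>x. -c0 + x) ` (C - {c0})"
  have indB: "\<not> dependent ?B" using affine_dependent_iff_dependent2[OF c0(1)] iC by simp
  obtain g :: "'a \<Rightarrow> real" where g: "linear g" "\<forall>b\<in>?B. g b = (if b = -c0 + v then 1 else 0)"
    using linear_independent_extend[OF indB, of "\<lambda>b. if b = -c0 + v then 1 else 0"] by auto
  have "m v = g (\<Sum>w\<in>C. m w *\<^sub>R w) - g c0" if m: "sum m C = 1" for m
  proof -
    have "(\<Sum>w\<in>C. m w *\<^sub>R w) - c0 = (\<Sum>w\<in>C. m w *\<^sub>R w) - (\<Sum>w\<in>C. m w) *\<^sub>R c0"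
      using m by simp
    also have "\<dots> = (\<Sum>w\<in>C. m w *\<^sub>R (-c0 + w))"
      by (simp add: scaleR_sum_left scaleR_diff_right sum_subtractf)
    also have "\<dots> = (\<Sum>w\<in>C - {c0}. m w *\<^sub>R (-c0 + w))"
      using c0(1) fC by (simp add: sum.remove)
    finally have e: "(\<Sum>w\<in>C. m w *\<^sub>R w) - c0 = (\<Sum>w\<in>C - {c0}. m w *\<^sub>R (-c0 + w))" .
    have "g (\<Sum>w\<in>C. m w *\<^sub>R w) - g c0 = g ((\<Sum>w\<in>C. m w *\<^sub>R w) - c0)" using g(1) by (simp add: linear_diff)
    also have "\<dots> = (\<Sum>w\<in>C - {c0}. m w * g (-c0 + w))"
      unfolding e using g(1) by (simp add: linear_sum linear_scale)
    also have "\<dots> = (\<Sum>w\<in>C - {c0}. (if w = v then m w else 0))"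
      using g(2) by (intro sum.cong) auto
    also have "\<dots> = m v" using v c0 fC by (simp add: sum.delta sum.delta')
    finally show ?thesis by simp
  qed
  then show ?thesis using that g(1) by blast
qed

locale cor35 =
  fixes K :: "'a::euclidean_space set set"
    and N :: "real^'n \<Rightarrow> real"
    and f :: "'a \<Rightarrow> real^'n"
    and chi :: "'a \<Rightarrow> real"
    and alpha :: real
  assumes K: "simplicial_complex K"
    and N: "is_norm N"
    and f_pl: "piecewise_linear_on K f"
    and f_min: "\<forall>S\<in>K. S \<noteq> {} \<longrightarrow>
                 (\<exists>v. v extreme_point_of S \<and> (\<forall>x\<in>S. N (f v) \<le> N (f x)))"
    and alpha: "alpha > 0"
    and chi_pl: "piecewise_linear_on K chi"
    and chi_vert: "\<forall>v\<in>cvertices K.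
                 chi v = (if N (f v) < alpha then 0 else if N (f v) = alpha then 1/2 else 1)"
begin

lemma finK: "finite K" using K unfolding simplicial_complex_def by auto

lemma simp_of: assumes "S \<in> K" obtains C where "finite C" "\<not> affine_dependent C" "S = convex hull C"
  using K assms unfolding simplicial_complex_def simplex by blast

lemma face_in:
  assumes "convex hull C \<in> K" "\<not> affine_dependent C" "D \<subseteq> C"
  shows "convex hull D \<in> K"
proof -
  have "convex hull D face_of convex hull C"
    using face_of_convex_hull_affine_independent[OF assms(2)] assms(3) by blast
  then show ?thesis using K assms(1) unfolding simplicial_complex_def by blast
qed

lemma vert_in:
  assumes "convex hull C \<in> K" "\<not> affine_dependent C"
  shows "C \<subseteq> cvertices K"
proof
  fix c assume "c \<in> C"
  then have "convex hull {c} \<in> K" using face_in[OF assms] by blast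
  then show "c \<in> cvertices K" unfolding cvertices_def by simp
qed

lemma finV: "finite (cvertices K)"
proof -
  have "cvertices K = (\<lambda>v. {v}) -` K" unfolding cvertices_def by auto
  then show ?thesis using finite_vimageI[OF finK, of "\<lambda>v. {v}"] by (simp add: inj_on_def)
qed

lemma carrier:
  assumes "x \<in> polyhedron K"
  obtains C where "convex hull C \<in> K" "\<not> affine_dependent C" "x \<in> convex hull C"
proof -
  obtain S where "S \<in> K" "x \<in> S" using assms unfolding polyhedron_def by blast
  then show ?thesis using simp_of[OF \<open>S \<in> K\<close>] that by metis
qed

lemma rep_unique:
  assumes "convex hull C \<in> K" "convex hull C' \<in> K" "\<not> affine_dependent C" "\<not> affine_dependent C'"
    "isrep C \<mu> x" "isrep C' \<mu>' x"
  shows "\<mu> = \<mu>'"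
proof -
  have fC: "finite C" "finite C'" using assms(3,4) aff_independent_finite by auto
  have x: "x \<in> convex hull C \<inter> convex hull C'"
    using isrep_in_hull[OF fC(1) assms(5)] isrep_in_hull[OF fC(2) assms(6)] by blast
  have "(convex hull C \<inter> convex hull C') face_of convex hull C"
    using K assms(1,2) unfolding simplicial_complex_def by blast
  then obtain D where D: "D \<subseteq> C" "convex hull C \<inter> convex hull C' = convex hull D"
    using face_of_convex_hull_affine_independent[OF assms(3)] by blast
  have "(convex hull C' \<inter> convex hull C) face_of convex hull C'"
    using K assms(1,2) unfolding simplicial_complex_def by blast
  then obtain D' where D': "D' \<subseteq> C'" "convex hull C \<inter> convex hull C' = convex hull D'"
    using face_of_convex_hull_affine_independent[OF assms(4)] by (metis Int_commute)
  have iD: "\<not> affine_dependent D" "\<not> affine_dependent D'"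
    using D(1) D'(1) assms(3,4) affine_independent_subset by blast+
  have "D = D'"
  proof -
    have "D = {y. y extreme_point_of convex hull D}"
      using extreme_point_of_convex_hull_affine_independent[OF iD(1)] by blast
    also have "\<dots> = {y. y extreme_point_of convex hull D'}" using D(2) D'(2) by simp
    also have "\<dots> = D'"
      using extreme_point_of_convex_hull_affine_independent[OF iD(2)] by blast
    finally show ?thesis .
  qed
  have fD: "finite D" using fC(1) D(1) finite_subset by blast
  obtain \<nu> where nu: "isrep D \<nu> x" using rep_exists[OF fD] x D(2) by auto
  have "\<mu> = \<nu>" by (rule isrep_unique[OF fC(1) assms(3) assms(5) isrep_mono[OF fC(1) D(1) nu]])
  moreover have "\<mu>' = \<nu>"
    by (rule isrep_unique[OF fC(2) assms(4) assms(6) isrep_mono[OF fC(2) D'(1)]]) (use nu \<open>D = D'\<close> in simp)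
  ultimately show ?thesis by simp
qed

definition bc :: "'a \<Rightarrow> 'a \<Rightarrow> real" where
  "bc x = (SOME \<mu>. \<exists>C. convex hull C \<in> K \<and> \<not> affine_dependent C \<and> isrep C \<mu> x)"

lemma bc_rep:
  assumes "convex hull C \<in> K" "\<not> affine_dependent C" "x \<in> convex hull C"
  shows "isrep C (bc x) x"
proof -
  have fC: "finite C" using assms(2) aff_independent_finite by auto
  obtain \<mu> where mu: "isrep C \<mu> x" using rep_exists[OF fC assms(3)] by blast
  then have "\<exists>\<mu> C. convex hull C \<in> K \<and> \<not> affine_dependent C \<and> isrep C \<mu> x" using assms by blast
  then have "\<exists>C. convex hull C \<in> K \<and> \<not> affine_dependent C \<and> isrep C (bc x) x"
    unfolding bc_def by (rule someI_ex[where P="\<lambda>\<mu>. \<exists>C. convex hull C \<in> K \<and> \<not> affine_dependent C \<and> isrep C \<mu> x", OF exE]) blast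
  then obtain C' where C': "convex hull C' \<in> K" "\<not> affine_dependent C'" "isrep C' (bc x) x" by blast
  have "\<mu> = bc x" by (rule rep_unique[OF assms(1) C'(1) assms(2) C'(2) mu C'(3)])
  then show ?thesis using mu by simp
qed

end

context cor35 begin

lemma pl_comb:
  assumes pl: "piecewise_linear_on K \<phi>" and S: "convex hull C \<in> K" and fC: "finite C"
    and mu: "\<forall>w\<in>C. 0 \<le> \<mu> w" "sum \<mu> C = 1"
  shows "(\<Sum>w\<in>C. \<mu> w *\<^sub>R w) \<in> convex hull C"
    "\<phi> (\<Sum>w\<in>C. \<mu> w *\<^sub>R w) = (\<Sum>w\<in>C. \<mu> w *\<^sub>R \<phi> w)"
proof -
  show y: "(\<Sum>w\<in>C. \<mu> w *\<^sub>R w) \<in> convex hull C"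
    unfolding convex_hull_finite[OF fC] using mu by blast
  obtain h c where hc: "linear h" "\<forall>x\<in>convex hull C. \<phi> x = h x + c"
    using pl S unfolding piecewise_linear_on_def by blast
  have "\<phi> (\<Sum>w\<in>C. \<mu> w *\<^sub>R w) = h (\<Sum>w\<in>C. \<mu> w *\<^sub>R w) + c" using hc y by blast
  also have "\<dots> = (\<Sum>w\<in>C. \<mu> w *\<^sub>R h w) + c"
    using hc(1) by (simp add: linear_sum linear_scale)
  also have "\<dots> = (\<Sum>w\<in>C. \<mu> w *\<^sub>R h w) + (\<Sum>w\<in>C. \<mu> w) *\<^sub>R c" using mu by simp
  also have "\<dots> = (\<Sum>w\<in>C. \<mu> w *\<^sub>R (h w + c))"
    by (simp add: scaleR_add_right sum.distrib scaleR_sum_left)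
  also have "\<dots> = (\<Sum>w\<in>C. \<mu> w *\<^sub>R \<phi> w)"
    using hc(2) hull_inc[of _ C] by (intro sum.cong) auto
  finally show "\<phi> (\<Sum>w\<in>C. \<mu> w *\<^sub>R w) = (\<Sum>w\<in>C. \<mu> w *\<^sub>R \<phi> w)" .
qed

lemma pl_cont:
  fixes \<phi> :: "'a \<Rightarrow> 'b::real_normed_vector"
  assumes pl: "piecewise_linear_on K \<phi>"
  shows "continuous_on (polyhedron K) \<phi>"
proof -
  have "continuous_on (\<Union>S\<in>K. S) \<phi>"
  proof (rule continuous_on_closed_Union[OF finK])
    fix S assume S: "S \<in> K"
    then show "closed S"
      by (metis simp_of compact_convex_hull finite_imp_compact compact_imp_closed)
    obtain h c where hc: "linear h" "\<forall>x\<in>S. \<phi> x = h x + c"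
      using pl S unfolding piecewise_linear_on_def by blast
    have "continuous_on S (\<lambda>x. h x + c)"
      using hc(1) by (intro continuous_intros) (simp add: linear_continuous_on linear_conv_bounded_linear)
    then show "continuous_on S \<phi>" using hc(2) continuous_on_eq by (metis (no_types, lifting))
  qed
  then show ?thesis unfolding polyhedron_def by simp
qed

lemma bc_pl: "piecewise_linear_on K (\<lambda>x. bc x v)"
  unfolding piecewise_linear_on_def
proof
  fix S assume S: "S \<in> K"
  obtain C where C: "finite C" "\<not> affine_dependent C" "S = convex hull C" using simp_of[OF S] by blast
  have SK: "convex hull C \<in> K" using S C by simp
  have rep: "isrep C (bc x) x" if "x \<in> S" for x using bc_rep[OF SK C(2)] that C(3) by simp
  show "\<exists>h c. linear h \<and> (\<forall>x\<in>S. bc x v = h x + c)"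
  proof (cases "v \<in> C")
    case False
    then show ?thesis using rep unfolding isrep_def
      by (intro exI[of _ "\<lambda>x. 0"] exI[of _ 0]) (auto simp: linear_zero)
  next
    case True
    show ?thesis
    proof (cases "C = {v}")
      case True
      then show ?thesis using rep unfolding isrep_def
        by (intro exI[of _ "\<lambda>x. 0"] exI[of _ 1]) (auto simp: linear_zero)
    next
      case False
      then obtain c0 where c0: "c0 \<in> C" "c0 \<noteq> v" using \<open>v \<in> C\<close> by blast
      obtain g :: "'a \<Rightarrow> real" where g: "linear g"
        "\<And>m. sum m C = 1 \<Longrightarrow> m v = g (\<Sum>w\<in>C. m w *\<^sub>R w) - g c0"
        using coord_affine[OF C(1,2) \<open>v \<in> C\<close> c0] by blast
      have "bc x v = g x - g c0" if x: "x \<in> S" for x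
        using g(2)[of "bc x"] rep[OF x] unfolding isrep_def by auto
      then show ?thesis using g(1) by (intro exI[of _ g] exI[of _ "- g c0"]) auto
    qed
  qed
qed

lemma bc_cont: "continuous_on (polyhedron K) (\<lambda>x. bc x v)"
  by (rule pl_cont[OF bc_pl])

abbreviation "V \<equiv> cvertices K"

lemma carrier_rep:
  assumes "x \<in> polyhedron K"
  obtains C where "convex hull C \<in> K" "\<not> affine_dependent C" "finite C" "C \<subseteq> V" "isrep C (bc x) x"
  using carrier[OF assms] bc_rep vert_in aff_independent_finite by (metis (no_types))

lemma sum_VC:
  assumes "C \<subseteq> V" "isrep C (bc x) x"
  shows "(\<Sum>v\<in>V. bc x v *\<^sub>R (g v::'b::real_vector)) = (\<Sum>v\<in>C. bc x v *\<^sub>R g v)"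
  by (rule sum.mono_neutral_right[OF finV assms(1)]) (use assms(2) in \<open>auto simp: isrep_def\<close>)

lemma pl_sumV:
  assumes pl: "piecewise_linear_on K \<phi>" and x: "x \<in> polyhedron K"
  shows "\<phi> x = (\<Sum>v\<in>V. bc x v *\<^sub>R \<phi> v)"
proof -
  obtain C where C: "convex hull C \<in> K" "\<not> affine_dependent C" "finite C" "C \<subseteq> V" "isrep C (bc x) x"
    using carrier_rep[OF x] by blast
  have "\<phi> x = \<phi> (\<Sum>w\<in>C. bc x w *\<^sub>R w)" using C(5) unfolding isrep_def by simp
  also have "\<dots> = (\<Sum>w\<in>C. bc x w *\<^sub>R \<phi> w)"
    by (rule pl_comb(2)[OF pl C(1) C(3)]) (use C(5) in \<open>auto simp: isrep_def\<close>)
  also have "\<dots> = (\<Sum>v\<in>V. bc x v *\<^sub>R \<phi> v)" using sum_VC[OF C(4,5), where g=\<phi>] by simp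
  finally show ?thesis .
qed

end

context cor35 begin

lemma Nb: "N 0 = 0" "\<And>x. N (-x) = N x" "\<And>x. N x \<ge> 0" "\<And>x y. N (x - y) \<ge> N x - N y"
    "\<And>c x. N (c *\<^sub>R x) = \<bar>c\<bar> * N x" "\<And>x y. N (x + y) \<le> N x + N y"
    "\<And>x. N x = 0 \<longleftrightarrow> x = 0"
  using isnorm_basics[OF N] by auto

lemma N_comb:
  assumes "finite C" "\<forall>w\<in>C. 0 \<le> \<mu> w"
  shows "N (\<Sum>w\<in>C. \<mu> w *\<^sub>R a w) \<le> (\<Sum>w\<in>C. \<mu> w * N (a w))"
proof -
  have "N (\<Sum>w\<in>C. \<mu> w *\<^sub>R a w) \<le> (\<Sum>w\<in>C. N (\<mu> w *\<^sub>R a w))" by (rule isnorm_sum[OF N assms(1)])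
  also have "\<dots> = (\<Sum>w\<in>C. \<mu> w * N (a w))" using assms(2) Nb(5) by (intro sum.cong) auto
  finally show ?thesis .
qed

lemma minvert:
  assumes S: "convex hull C \<in> K" and iC: "\<not> affine_dependent C" and fC: "finite C"
    and mu: "\<forall>w\<in>C. 0 \<le> \<mu> w" "sum \<mu> C = 1"
  shows "\<exists>v\<in>C. \<mu> v > 0 \<and> N (f v) \<le> N (f (\<Sum>w\<in>C. \<mu> w *\<^sub>R w))"
proof -
  define D where "D = {w\<in>C. \<mu> w > 0}"
  have DC: "D \<subseteq> C" unfolding D_def by auto
  have fD: "finite D" using fC DC finite_subset by blast
  have DK: "convex hull D \<in> K" by (rule face_in[OF S iC DC])
  have "(\<Sum>w\<in>C. \<mu> w *\<^sub>R w) = (\<Sum>w\<in>D. \<mu> w *\<^sub>R w)"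
    by (rule sum.mono_neutral_right[OF fC DC]) (use mu in \<open>auto simp: D_def\<close>)
  moreover have "sum \<mu> D = 1"
    using mu by (metis (no_types, lifting) DC D_def fC mem_Collect_eq order_less_le sum.mono_neutral_right DiffD1 DiffD2)
  ultimately have y: "(\<Sum>w\<in>C. \<mu> w *\<^sub>R w) \<in> convex hull D"
    unfolding convex_hull_finite[OF fD] using mu DC by auto
  then have ne: "convex hull D \<noteq> {}" by blast
  obtain v where v: "v extreme_point_of convex hull D" "\<forall>x\<in>convex hull D. N (f v) \<le> N (f x)"
    using f_min DK ne by blast
  have "v \<in> D" using extreme_point_of_convex_hull[OF v(1)] .
  then show ?thesis using v(2) y unfolding D_def by blast
qed

lemma zero_lemma:
  assumes S: "convex hull C \<in> K" and iC: "\<not> affine_dependent C" and fC: "finite C"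
  shows "\<forall>w\<in>C. 0 \<le> \<mu> w \<Longrightarrow> sum \<mu> C = 1 \<Longrightarrow> f (\<Sum>w\<in>C. \<mu> w *\<^sub>R w) = 0 \<Longrightarrow>
         \<forall>w\<in>C. \<mu> w > 0 \<longrightarrow> f w = 0"
proof (induction "card {w\<in>C. \<mu> w > 0}" arbitrary: \<mu> rule: less_induct)
  case less
  obtain v where v: "v \<in> C" "\<mu> v > 0" "N (f v) \<le> N (f (\<Sum>w\<in>C. \<mu> w *\<^sub>R w))"
    using minvert[OF S iC fC less.prems(1,2)] by blast
  have fv: "f v = 0" using v(3) less.prems(3) Nb(1,3,7) by (metis order_antisym)
  have fy: "(\<Sum>w\<in>C. \<mu> w *\<^sub>R f w) = 0"
    using pl_comb(2)[OF f_pl S fC less.prems(1,2)] less.prems(3) by simp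
  have "\<mu> v \<le> sum \<mu> C" by (rule member_le_sum) (use less.prems(1) v(1) fC in auto)
  then have le1: "\<mu> v \<le> 1" using less.prems(2) by simp
  show ?case
  proof (cases "\<mu> v = 1")
    case True
    have "sum \<mu> (C - {v}) = 0" using less.prems(2) True sum.remove[OF fC v(1), of \<mu>] by simp
    then have "\<forall>w\<in>C - {v}. \<mu> w = 0"
      using sum_nonneg_eq_0_iff[of "C - {v}" \<mu>] fC less.prems(1) by auto
    then show ?thesis using fv by (metis DiffI less_irrefl singletonD)
  next
    case False
    then have lt: "\<mu> v < 1" using le1 by simp
    define \<mu>' where "\<mu>' w = (if w = v then 0 else \<mu> w / (1 - \<mu> v))" for w
    have nn: "\<forall>w\<in>C. 0 \<le> \<mu>' w" using less.prems(1) lt unfolding \<mu>'_def by auto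
    have s1: "sum \<mu> (C - {v}) = 1 - \<mu> v" using less.prems(2) sum.remove[OF fC v(1), of \<mu>] by simp
    have m0: "\<mu>' v = 0" unfolding \<mu>'_def by simp
    have "sum \<mu>' C = sum \<mu>' (C - {v})" using sum.remove[OF fC v(1), of \<mu>'] m0 by simp
    also have "\<dots> = sum (\<lambda>w. \<mu> w / (1 - \<mu> v)) (C - {v})" unfolding \<mu>'_def by (intro sum.cong) auto
    also have "\<dots> = 1" using s1 lt by (simp add: sum_divide_distrib[symmetric])
    finally have sum1: "sum \<mu>' C = 1" .
    have "(\<Sum>w\<in>C. \<mu>' w *\<^sub>R f w) = (\<Sum>w\<in>C - {v}. \<mu>' w *\<^sub>R f w)"
      using sum.remove[OF fC v(1), of "\<lambda>w. \<mu>' w *\<^sub>R f w"] m0 by simp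
    also have "\<dots> = (1 / (1 - \<mu> v)) *\<^sub>R (\<Sum>w\<in>C - {v}. \<mu> w *\<^sub>R f w)"
      unfolding \<mu>'_def scaleR_sum_right by (intro sum.cong) auto
    also have "(\<Sum>w\<in>C - {v}. \<mu> w *\<^sub>R f w) = (\<Sum>w\<in>C. \<mu> w *\<^sub>R f w) - \<mu> v *\<^sub>R f v"
      using sum.remove[OF fC v(1), of "\<lambda>w. \<mu> w *\<^sub>R f w"] by simp
    finally have "(\<Sum>w\<in>C. \<mu>' w *\<^sub>R f w) = 0" using fy fv by simp
    then have fz: "f (\<Sum>w\<in>C. \<mu>' w *\<^sub>R w) = 0"
      using pl_comb(2)[OF f_pl S fC nn sum1] by simp
    have sub: "{w\<in>C. \<mu>' w > 0} \<subseteq> {w\<in>C. \<mu> w > 0} - {v}"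
      unfolding \<mu>'_def using lt by (auto simp: zero_less_divide_iff)
    have "card {w\<in>C. \<mu>' w > 0} < card {w\<in>C. \<mu> w > 0}"
    proof -
      have "card {w\<in>C. \<mu>' w > 0} \<le> card ({w\<in>C. \<mu> w > 0} - {v})"
        using sub fC by (intro card_mono) auto
      also have "\<dots> < card {w\<in>C. \<mu> w > 0}"
        using v(1,2) fC by (intro card_Diff1_less) auto
      finally show ?thesis .
    qed
    then have IH: "\<forall>w\<in>C. \<mu>' w > 0 \<longrightarrow> f w = 0" using less.hyps nn sum1 fz by blast
    show ?thesis
    proof (intro ballI impI)
      fix w assume "w \<in> C" "\<mu> w > 0"
      show "f w = 0"
      proof (cases "w = v")
        case True then show ?thesis using fv by simp
      next
        case False then have "\<mu>' w > 0" using \<open>\<mu> w > 0\<close> lt unfolding \<mu>'_def by simp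
        then show ?thesis using IH \<open>w \<in> C\<close> by blast
      qed
    qed
  qed
qed

end

context cor35 begin

definition ind :: "'a \<Rightarrow> real" where "ind v = (if N (f v) < alpha then 1 else 0)"
definition sL :: "'a \<Rightarrow> real" where "sL x = (\<Sum>v\<in>V. bc x v * ind v)"
definition x1 :: "'a \<Rightarrow> 'a" where
  "x1 x = (1 / (1 - sL x)) *\<^sub>R (\<Sum>v\<in>V. (bc x v * (1 - ind v)) *\<^sub>R v)"
definition Pm :: "real \<Rightarrow> 'a \<Rightarrow> 'a" where "Pm t x = (1 - t) *\<^sub>R x + t *\<^sub>R x1 x"
definition nu :: "real \<Rightarrow> 'a \<Rightarrow> 'a \<Rightarrow> real" where
  "nu t x w = (1 - t) * bc x w + t * (bc x w * (1 - ind w) / (1 - sL x))"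

lemma ind01: "ind v = 0 \<or> ind v = 1" unfolding ind_def by auto
lemma ind_ge: "0 \<le> ind v" unfolding ind_def by auto
lemma ind_le: "ind v \<le> 1" unfolding ind_def by auto

lemma chi_ind: assumes "v \<in> V" shows "chi v \<le> 1 - ind v" "(1 - ind v) / 2 \<le> chi v"
  using chi_vert assms unfolding ind_def by auto

lemma sum_VC_real:
  assumes "C \<subseteq> V" "isrep C (bc x) x"
  shows "(\<Sum>v\<in>V. bc x v * g v) = (\<Sum>v\<in>C. bc x v * g v)"
  by (rule sum.mono_neutral_right[OF finV assms(1)]) (use assms(2) in \<open>auto simp: isrep_def\<close>)

lemma sum_VC_vec:
  assumes "C \<subseteq> V" "isrep C (bc x) x"
  shows "(\<Sum>v\<in>V. (bc x v * g v) *\<^sub>R (h v :: 'b::real_vector)) = (\<Sum>v\<in>C. (bc x v * g v) *\<^sub>R h v)"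
  by (rule sum.mono_neutral_right[OF finV assms(1)]) (use assms(2) in \<open>auto simp: isrep_def\<close>)

context
  fixes x C
  assumes x: "x \<in> polyhedron K" and CK: "convex hull C \<in> K" and iC: "\<not> affine_dependent C"
    and fC: "finite C" and CV: "C \<subseteq> V" and rep: "isrep C (bc x) x"
begin

lemma bcnn: "\<forall>w\<in>C. 0 \<le> bc x w" using rep unfolding isrep_def by auto
lemma bcsum: "sum (bc x) C = 1" using rep unfolding isrep_def by auto
lemma bcx: "(\<Sum>w\<in>C. bc x w *\<^sub>R w) = x" using rep unfolding isrep_def by auto

lemma sLC: "sL x = (\<Sum>w\<in>C. bc x w * ind w)"
  unfolding sL_def by (rule sum_VC_real[OF CV rep])

lemma sLC': "(\<Sum>w\<in>C. bc x w * (1 - ind w)) = 1 - sL x"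
  using bcsum unfolding sLC by (simp add: algebra_simps sum_subtractf)

lemma sL_le1: "sL x \<le> 1"
proof -
  have "(\<Sum>w\<in>C. bc x w * (1 - ind w)) \<ge> 0"
    using bcnn ind_le by (intro sum_nonneg mult_nonneg_nonneg) auto
  then show ?thesis using sLC' by simp
qed

lemma fx_sum: "f x = (\<Sum>w\<in>C. bc x w *\<^sub>R f w)"
  using pl_comb(2)[OF f_pl CK fC bcnn bcsum] bcx by simp

lemma chix_sum: "chi x = (\<Sum>w\<in>C. bc x w * chi w)"
  using pl_comb(2)[OF chi_pl CK fC bcnn bcsum] bcx by simp

lemma F1: assumes "N (f x) \<ge> alpha" shows "sL x < 1"
proof (rule ccontr)
  assume "\<not> sL x < 1"
  then have "sL x = 1" using sL_le1 by simp
  then have z: "(\<Sum>w\<in>C. bc x w * (1 - ind w)) = 0" using sLC' by simp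
  have nn: "\<forall>w\<in>C. 0 \<le> bc x w * (1 - ind w)" using bcnn ind_le by (auto intro: mult_nonneg_nonneg)
  have z2': "\<forall>w\<in>C. bc x w * (1 - ind w) = 0" using sum_nonneg_eq_0_iff[OF fC, of "\<lambda>w. bc x w * (1 - ind w)"] nn z by simp
  have z2: "\<forall>w\<in>C. bc x w \<noteq> 0 \<longrightarrow> ind w = 1" using z2' by force
  have le: "\<forall>w\<in>C. bc x w * N (f w) \<le> bc x w * alpha"
  proof
    fix w assume w: "w \<in> C"
    show "bc x w * N (f w) \<le> bc x w * alpha"
    proof (cases "bc x w = 0")
      case False
      then have "ind w = 1" using z2 w by blast
      then have "N (f w) < alpha" unfolding ind_def by (auto split: if_splits)
      then show ?thesis using bcnn w by (simp add: mult_left_mono)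
    qed simp
  qed
  have "\<exists>w\<in>C. bc x w \<noteq> 0"
  proof (rule ccontr)
    assume "\<not> (\<exists>w\<in>C. bc x w \<noteq> 0)"
    then have "sum (bc x) C = 0" by simp
    then show False using bcsum by simp
  qed
  then obtain w where w0: "w \<in> C" "bc x w \<noteq> 0" by blast
  then have w: "w \<in> C" "bc x w > 0" using bcnn by force+
  have lt: "bc x w * N (f w) < bc x w * alpha"
  proof -
    have "ind w = 1" using z2 w by force
    then have "N (f w) < alpha" unfolding ind_def by (auto split: if_splits)
    then show ?thesis using w(2) by simp
  qed
  have "N (f x) \<le> (\<Sum>w\<in>C. bc x w * N (f w))" unfolding fx_sum by (rule N_comb[OF fC bcnn])
  also have "\<dots> < (\<Sum>w\<in>C. bc x w * alpha)" by (rule sum_strict_mono_ex1[OF fC le], rule bexI[of _ w]) (use lt w in auto)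
  also have "\<dots> = alpha" using bcsum by (simp add: sum_distrib_right[symmetric])
  finally show False using assms by simp
qed

lemma F2: assumes "chi x \<ge> 1/2" shows "sL x \<le> 1/2"
proof -
  have "chi x \<le> (\<Sum>w\<in>C. bc x w * (1 - ind w))"
    unfolding chix_sum using bcnn chi_ind(1) CV by (intro sum_mono mult_left_mono) auto
  then show ?thesis using sLC' assms by simp
qed

context assumes s1: "sL x < 1"
begin

lemma nu_nn: assumes "0 \<le> t" "t \<le> 1" shows "\<forall>w\<in>C. 0 \<le> nu t x w"
  using bcnn ind_le assms s1 unfolding nu_def
  by (auto intro!: add_nonneg_nonneg mult_nonneg_nonneg divide_nonneg_nonneg)

lemma nu_sum: "sum (nu t x) C = 1"
proof -
  have "sum (nu t x) C = (1 - t) * sum (bc x) C + t * ((\<Sum>w\<in>C. bc x w * (1 - ind w)) / (1 - sL x))"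
    unfolding nu_def by (simp add: sum.distrib sum_distrib_left sum_divide_distrib)
  then show ?thesis using bcsum sLC' s1 by simp
qed

lemma Pm_rep: "Pm t x = (\<Sum>w\<in>C. nu t x w *\<^sub>R w)"
proof -
  have "x1 x = (\<Sum>w\<in>C. (bc x w * (1 - ind w) / (1 - sL x)) *\<^sub>R w)"
    unfolding x1_def sum_VC_vec[OF CV rep] scaleR_sum_right by (simp add: divide_inverse mult.commute)
  then have "Pm t x = (1 - t) *\<^sub>R (\<Sum>w\<in>C. bc x w *\<^sub>R w) + t *\<^sub>R (\<Sum>w\<in>C. (bc x w * (1 - ind w) / (1 - sL x)) *\<^sub>R w)"
    unfolding Pm_def bcx by simp
  also have "\<dots> = (\<Sum>w\<in>C. nu t x w *\<^sub>R w)"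
    unfolding nu_def scaleR_sum_right scaleR_add_left sum.distrib by simp
  finally show ?thesis .
qed

lemma F7: assumes "0 \<le> t" "t \<le> 1" shows "Pm t x \<in> convex hull C" "Pm t x \<in> polyhedron K"
proof -
  show h: "Pm t x \<in> convex hull C" unfolding Pm_rep by (rule pl_comb(1)[OF f_pl CK fC nu_nn[OF assms] nu_sum])
  show "Pm t x \<in> polyhedron K" using h CK unfolding polyhedron_def by blast
qed

lemma fPm: assumes "0 \<le> t" "t \<le> 1" shows "f (Pm t x) = (\<Sum>w\<in>C. nu t x w *\<^sub>R f w)"
  unfolding Pm_rep by (rule pl_comb(2)[OF f_pl CK fC nu_nn[OF assms] nu_sum])

lemma F3: assumes "0 \<le> t" "t \<le> 1" shows "f (Pm t x) \<noteq> 0"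
proof
  assume f0: "f (Pm t x) = 0"
  have Z: "\<forall>w\<in>C. nu t x w > 0 \<longrightarrow> f w = 0"
    using zero_lemma[OF CK iC fC nu_nn[OF assms] nu_sum] f0 unfolding Pm_rep by blast
  have "(\<Sum>w\<in>C. bc x w * (1 - ind w)) > 0" using sLC' s1 by simp
  then obtain w where w: "w \<in> C" "bc x w * (1 - ind w) > 0"
    by (metis (no_types, lifting) not_le sum_nonpos)
  then have i0: "ind w = 0" "bc x w > 0" using ind01[of w] bcnn
    by (auto simp: zero_less_mult_iff)
  have "0 \<le> sL x" unfolding sLC using bcnn ind_ge by (intro sum_nonneg mult_nonneg_nonneg) auto
  then have d: "1 / (1 - sL x) \<ge> 1" using s1 by (simp add: le_divide_eq)
  have "nu t x w = (1 - t) * bc x w + t * (bc x w * (1 / (1 - sL x)))" unfolding nu_def i0 by simp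
  also have "\<dots> \<ge> (1 - t) * bc x w + t * (bc x w * 1)"
    using d i0(2) assms by (intro add_left_mono mult_left_mono) auto
  finally have "nu t x w \<ge> bc x w" by (simp add: algebra_simps)
  then have "nu t x w > 0" using i0(2) by simp
  then have "f w = 0" using Z w(1) by blast
  then have "ind w = 1" unfolding ind_def using Nb(1) alpha by simp
  then show False using i0 by simp
qed

lemma F4: "N (f (Pm 1 x)) \<ge> alpha"
proof -
  obtain v where v: "v \<in> C" "nu 1 x v > 0" "N (f v) \<le> N (f (Pm 1 x))"
    using minvert[OF CK iC fC nu_nn[of 1] nu_sum] unfolding Pm_rep by auto
  have "ind v = 0" using v(2) ind01[of v] unfolding nu_def by auto
  then have "N (f v) \<ge> alpha" unfolding ind_def by (auto split: if_splits)
  then show ?thesis using v(3) by simp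
qed

lemma F5: "chi (Pm 1 x) \<ge> 1/2"
proof -
  have "chi (Pm 1 x) = (\<Sum>w\<in>C. nu 1 x w * chi w)"
    unfolding Pm_rep using pl_comb(2)[OF chi_pl CK fC nu_nn[of 1] nu_sum] by simp
  also have "\<dots> \<ge> (\<Sum>w\<in>C. nu 1 x w * (1/2))"
  proof (rule sum_mono)
    fix w assume w: "w \<in> C"
    show "nu 1 x w * (1/2) \<le> nu 1 x w * chi w"
    proof (cases "ind w = 0")
      case True
      then have "1/2 \<le> chi w" using chi_ind(2)[of w] CV w by auto
      moreover have "0 \<le> nu 1 x w" using nu_nn[of 1] w by simp
      ultimately show ?thesis using mult_left_mono[of "1/2" "chi w" "nu 1 x w"] by simp
    next
      case False then have "ind w = 1" using ind01 by blast
      then show ?thesis unfolding nu_def by simp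
    qed
  qed
  also have "(\<Sum>w\<in>C. nu 1 x w * (1/2)) = 1/2" using nu_sum[of 1] sum_distrib_right[of "nu 1 x" C "1/2", symmetric] by simp
  finally show ?thesis .
qed

lemma F6: assumes "0 \<le> t" "t \<le> 1" "N (f x) \<ge> alpha" shows "N (f (Pm t x)) \<ge> alpha"
proof -
  define a where "a = (\<Sum>w\<in>C. (bc x w * ind w) *\<^sub>R f w)"
  define b where "b = (\<Sum>w\<in>C. (bc x w * (1 - ind w)) *\<^sub>R f w)"
  define d where "d = t / (1 - sL x)"
  have d0: "d \<ge> 0" unfolding d_def using assms s1 by simp
  have dt: "d * (1 - sL x) = t" unfolding d_def using s1 by simp
  have fx: "f x = a + b"
  proof -
    have "f x = (\<Sum>w\<in>C. (bc x w * ind w) *\<^sub>R f w + (bc x w * (1 - ind w)) *\<^sub>R f w)"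
      unfolding fx_sum
    proof (rule sum.cong[OF refl])
      fix w
      have "bc x w = bc x w * ind w + bc x w * (1 - ind w)" by (simp add: right_diff_distrib)
      then show "bc x w *\<^sub>R f w = (bc x w * ind w) *\<^sub>R f w + (bc x w * (1 - ind w)) *\<^sub>R f w"
        by (metis scaleR_add_left)
    qed
    then show ?thesis unfolding a_def b_def by (simp only: sum.distrib)
  qed
  have "f (Pm t x) = (\<Sum>w\<in>C. ((1 - t) * bc x w) *\<^sub>R f w + (d * (bc x w * (1 - ind w))) *\<^sub>R f w)"
    unfolding fPm[OF assms(1,2)]
  proof (rule sum.cong[OF refl])
    fix w
    have "nu t x w = (1 - t) * bc x w + d * (bc x w * (1 - ind w))" unfolding nu_def d_def by simp
    then show "nu t x w *\<^sub>R f w = ((1 - t) * bc x w) *\<^sub>R f w + (d * (bc x w * (1 - ind w))) *\<^sub>R f w"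
      by (metis scaleR_add_left)
  qed
  also have "\<dots> = (1 - t) *\<^sub>R (\<Sum>w\<in>C. bc x w *\<^sub>R f w) + d *\<^sub>R b"
    unfolding b_def sum.distrib scaleR_sum_right by simp
  also have "\<dots> = (1 - t + d) *\<^sub>R f x - d *\<^sub>R a" unfolding fx_sum[symmetric] fx
    by (simp add: scaleR_add_left scaleR_add_right scaleR_diff_left)
  finally have fP: "f (Pm t x) = (1 - t + d) *\<^sub>R f x - d *\<^sub>R a" .
  have Na: "N a \<le> sL x * alpha"
  proof -
    have "N a \<le> (\<Sum>w\<in>C. (bc x w * ind w) * N (f w))" unfolding a_def
      by (rule N_comb[OF fC]) (use bcnn ind_ge in \<open>auto intro: mult_nonneg_nonneg\<close>)
    also have "\<dots> \<le> (\<Sum>w\<in>C. (bc x w * ind w) * alpha)"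
    proof (rule sum_mono)
      fix w assume w: "w \<in> C"
      show "bc x w * ind w * N (f w) \<le> bc x w * ind w * alpha"
        using bcnn w unfolding ind_def by (auto intro: mult_left_mono)
    qed
    also have "\<dots> = sL x * alpha" unfolding sLC by (simp add: sum_distrib_right)
    finally show ?thesis .
  qed
  have "N (f (Pm t x)) \<ge> N ((1 - t + d) *\<^sub>R f x) - N (d *\<^sub>R a)" unfolding fP by (rule Nb(4))
  also have "N ((1 - t + d) *\<^sub>R f x) - N (d *\<^sub>R a) = (1 - t + d) * N (f x) - d * N a"
    using d0 assms(2) by (simp add: Nb(5))
  finally have "N (f (Pm t x)) \<ge> (1 - t + d) * N (f x) - d * N a" .
  moreover have "(1 - t + d) * N (f x) \<ge> (1 - t + d) * alpha"
    using assms d0 by (intro mult_left_mono) auto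
  moreover have "d * N a \<le> d * (sL x * alpha)" by (rule mult_left_mono[OF Na d0])
  moreover have "(1 - t + d) * alpha - d * (sL x * alpha) = (1 - t + d * (1 - sL x)) * alpha"
    by (simp add: algebra_simps)
  moreover have "(1 - t + d * (1 - sL x)) * alpha = alpha" using dt by simp
  ultimately show ?thesis by linarith
qed

end
end

lemma Pm0: "Pm 0 x = x" unfolding Pm_def by simp

end

lemma hom_lemma:
  fixes k :: "real \<times> 'a::topological_space \<Rightarrow> 'b::topological_space"
  assumes "continuous_on ({0..1} \<times> S) k" "k ` ({0..1} \<times> S) \<subseteq> U"
    "\<forall>x\<in>S. k (0, x) = p x" "\<forall>x\<in>S. k (1, x) = q x"
  shows "homotopic_with_canon (\<lambda>x. True) S U p q"
proof -
  have e: "homotopic_with (\<lambda>x. True) (top_of_set S) (top_of_set U) p q \<longleftrightarrow>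
           (\<exists>h. continuous_map (prod_topology (subtopology euclideanreal {0..1}) (top_of_set S)) (top_of_set U) h \<and>
              (\<forall>x \<in> topspace (top_of_set S). h(0,x) = p x) \<and>
              (\<forall>x \<in> topspace (top_of_set S). h(1,x) = q x) \<and>
              (\<forall>t \<in> {0..1}. (\<lambda>x. True) (\<lambda>x. h(t, x))))"
    by (rule homotopic_with) simp
  show ?thesis unfolding e
    using assms by (intro exI[of _ k]) (auto simp: prod_topology_subtopology_eu continuous_map_subtopology_eu)
qed

lemma gen_ext:
  fixes \<phi> :: "'a::topological_space \<Rightarrow> real" and f :: "'a \<Rightarrow> 'b::real_normed_vector"
  assumes phi: "continuous_on P \<phi>" and fc: "continuous_on P f"
    and nz: "\<forall>x\<in>P. c \<le> \<phi> x \<longrightarrow> f x \<noteq> 0"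
  shows "(\<exists>F. continuous_on {x\<in>P. \<phi> x \<le> c} F \<and> F ` {x\<in>P. \<phi> x \<le> c} \<subseteq> - {0} \<and>
              (\<forall>x\<in>{x\<in>P. \<phi> x = c}. F x = f x))
     \<longleftrightarrow> (\<exists>H. continuous_on P H \<and> H ` P \<subseteq> - {0} \<and> (\<forall>x\<in>{x\<in>P. c \<le> \<phi> x}. H x = f x))"
proof
  assume "\<exists>F. continuous_on {x\<in>P. \<phi> x \<le> c} F \<and> F ` {x\<in>P. \<phi> x \<le> c} \<subseteq> - {0} \<and>
              (\<forall>x\<in>{x\<in>P. \<phi> x = c}. F x = f x)"
  then obtain F where F: "continuous_on {x\<in>P. \<phi> x \<le> c} F" "F ` {x\<in>P. \<phi> x \<le> c} \<subseteq> - {0}"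
    "\<forall>x\<in>{x\<in>P. \<phi> x = c}. F x = f x" by blast
  let ?H = "\<lambda>x. if \<phi> x \<le> c then F x else f x"
  have "continuous_on P ?H"
    by (rule continuous_on_cases_le[OF F(1) continuous_on_subset[OF fc] phi]) (use F(3) in auto)
  moreover have "?H ` P \<subseteq> - {0}" using F(2) nz by auto
  moreover have "\<forall>x\<in>{x\<in>P. c \<le> \<phi> x}. ?H x = f x" using F(3) by auto
  ultimately show "\<exists>H. continuous_on P H \<and> H ` P \<subseteq> - {0} \<and> (\<forall>x\<in>{x\<in>P. c \<le> \<phi> x}. H x = f x)"
    by blast
next
  assume "\<exists>H. continuous_on P H \<and> H ` P \<subseteq> - {0} \<and> (\<forall>x\<in>{x\<in>P. c \<le> \<phi> x}. H x = f x)"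
  then obtain H where H: "continuous_on P H" "H ` P \<subseteq> - {0}" "\<forall>x\<in>{x\<in>P. c \<le> \<phi> x}. H x = f x"
    by blast
  have "continuous_on {x\<in>P. \<phi> x \<le> c} H" by (rule continuous_on_subset[OF H(1)]) auto
  moreover have "H ` {x\<in>P. \<phi> x \<le> c} \<subseteq> - {0}" using H(2) by auto
  moreover have "\<forall>x\<in>{x\<in>P. \<phi> x = c}. H x = f x" using H(3) by auto
  ultimately show "\<exists>F. continuous_on {x\<in>P. \<phi> x \<le> c} F \<and> F ` {x\<in>P. \<phi> x \<le> c} \<subseteq> - {0} \<and>
              (\<forall>x\<in>{x\<in>P. \<phi> x = c}. F x = f x)" by blast
qed

context cor35 begin

abbreviation "PP \<equiv> polyhedron K"

lemma sL_cont: "continuous_on PP sL"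
  unfolding sL_def[abs_def] by (intro continuous_intros bc_cont)

lemma x1_cont: assumes "Z \<subseteq> PP" "\<forall>x\<in>Z. sL x < 1" shows "continuous_on Z x1"
proof -
  have "continuous_on Z sL" using continuous_on_subset[OF sL_cont assms(1)] .
  moreover have "continuous_on Z (\<lambda>x. bc x v)" for v using continuous_on_subset[OF bc_cont assms(1)] .
  ultimately show ?thesis using assms(2) unfolding x1_def[abs_def]
    by (intro continuous_intros) auto
qed

lemma Pm_cont: assumes "Z \<subseteq> PP" "\<forall>x\<in>Z. sL x < 1"
  shows "continuous_on ({0..1} \<times> Z) (\<lambda>p. Pm (fst p) (snd p))"
proof -
  have "continuous_on ({0..1} \<times> Z) (\<lambda>p. x1 (snd p))"
    by (rule continuous_on_compose2[OF x1_cont[OF assms] continuous_on_snd]) auto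
  then show ?thesis unfolding Pm_def by (intro continuous_intros) auto
qed

lemma gF: assumes x: "x \<in> PP"
  shows "N (f x) \<ge> alpha \<Longrightarrow> sL x < 1"
    "chi x \<ge> 1/2 \<Longrightarrow> sL x \<le> 1/2"
    "sL x < 1 \<Longrightarrow> 0 \<le> t \<Longrightarrow> t \<le> 1 \<Longrightarrow> f (Pm t x) \<noteq> 0"
    "sL x < 1 \<Longrightarrow> N (f (Pm 1 x)) \<ge> alpha"
    "sL x < 1 \<Longrightarrow> chi (Pm 1 x) \<ge> 1/2"
    "sL x < 1 \<Longrightarrow> 0 \<le> t \<Longrightarrow> t \<le> 1 \<Longrightarrow> N (f x) \<ge> alpha \<Longrightarrow> N (f (Pm t x)) \<ge> alpha"
    "sL x < 1 \<Longrightarrow> 0 \<le> t \<Longrightarrow> t \<le> 1 \<Longrightarrow> Pm t x \<in> PP"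
proof -
  obtain C where C: "convex hull C \<in> K" "\<not> affine_dependent C" "finite C" "C \<subseteq> V" "isrep C (bc x) x"
    using carrier_rep[OF x] by blast
  show "N (f x) \<ge> alpha \<Longrightarrow> sL x < 1" using F1[OF x C] .
  show "chi x \<ge> 1/2 \<Longrightarrow> sL x \<le> 1/2" using F2[OF x C] .
  show "sL x < 1 \<Longrightarrow> 0 \<le> t \<Longrightarrow> t \<le> 1 \<Longrightarrow> f (Pm t x) \<noteq> 0" using F3[OF x C] by blast
  show "sL x < 1 \<Longrightarrow> N (f (Pm 1 x)) \<ge> alpha" using F4[OF x C] .
  show "sL x < 1 \<Longrightarrow> chi (Pm 1 x) \<ge> 1/2" using F5[OF x C] .
  show "sL x < 1 \<Longrightarrow> 0 \<le> t \<Longrightarrow> t \<le> 1 \<Longrightarrow> N (f x) \<ge> alpha \<Longrightarrow> N (f (Pm t x)) \<ge> alpha"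
    using F6[OF x C] by blast
  show "sL x < 1 \<Longrightarrow> 0 \<le> t \<Longrightarrow> t \<le> 1 \<Longrightarrow> Pm t x \<in> PP" using F7(2)[OF x C] by blast
qed

lemma f_cont: "continuous_on PP f" by (rule pl_cont[OF f_pl])
lemma chi_cont: "continuous_on PP chi" by (rule pl_cont[OF chi_pl])
lemma Nf_cont: "continuous_on PP (\<lambda>x. N (f x))"
  by (rule continuous_on_compose2[OF isnorm_cont[OF N] f_cont]) auto

lemma transfer:
  assumes ZaP: "closedin (top_of_set PP) Za"
    and s1: "\<forall>x\<in>Za. sL x < 1"
    and nz: "\<forall>x\<in>Za. \<forall>t\<in>{0..1}. f (Pm t x) \<noteq> 0"
    and end1: "\<forall>x\<in>Za. Pm 1 x \<in> Zb"
    and H: "continuous_on PP H" "H ` PP \<subseteq> - {0}" "\<forall>x\<in>Zb. H x = f x"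
  shows "\<exists>H'. continuous_on PP H' \<and> H' ` PP \<subseteq> - {0} \<and> (\<forall>x\<in>Za. H' x = f x)"
proof -
  have ZP: "Za \<subseteq> PP" using closedin_imp_subset[OF ZaP] .
  have PmP: "Pm t x \<in> PP" if "x \<in> Za" "t \<in> {0..1}" for x t
    using gF(7)[of x t] that s1 ZP by auto
  have Pc: "continuous_on ({0..1} \<times> Za) (\<lambda>p. Pm (fst p) (snd p))" by (rule Pm_cont[OF ZP s1])
  have h1: "homotopic_with_canon (\<lambda>x. True) Za (- {0}) H (\<lambda>x. f (Pm 1 x))"
  proof (rule hom_lemma[where k="\<lambda>p. H (Pm (fst p) (snd p))"])
    show "continuous_on ({0..1} \<times> Za) (\<lambda>p. H (Pm (fst p) (snd p)))"
      by (rule continuous_on_compose2[OF H(1) Pc]) (use PmP in auto)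
    show "(\<lambda>p. H (Pm (fst p) (snd p))) ` ({0..1} \<times> Za) \<subseteq> - {0}" using PmP H(2) by force
    show "\<forall>x\<in>Za. H (Pm (fst (0::real, x)) (snd (0::real, x))) = H x" by (simp add: Pm0)
    show "\<forall>x\<in>Za. H (Pm (fst (1::real, x)) (snd (1::real, x))) = f (Pm 1 x)" using end1 H(3) by simp
  qed
  have Pc2: "continuous_on ({0..1} \<times> Za) (\<lambda>p. Pm (1 - fst p) (snd p))"
  proof -
    have "continuous_on ({0..1} \<times> Za) (\<lambda>p::real\<times>'a. (1 - fst p, snd p))" by (auto intro!: continuous_intros)
    moreover have "(\<lambda>p::real\<times>'a. (1 - fst p, snd p)) ` ({0..1} \<times> Za) \<subseteq> {0..1} \<times> Za" by auto
    ultimately show ?thesis using continuous_on_compose2[OF Pc] by fastforce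
  qed
  have h2: "homotopic_with_canon (\<lambda>x. True) Za (- {0}) (\<lambda>x. f (Pm 1 x)) f"
  proof (rule hom_lemma[where k="\<lambda>p. f (Pm (1 - fst p) (snd p))"])
    show "continuous_on ({0..1} \<times> Za) (\<lambda>p. f (Pm (1 - fst p) (snd p)))"
      by (rule continuous_on_compose2[OF f_cont Pc2]) (use PmP in auto)
    show "(\<lambda>p. f (Pm (1 - fst p) (snd p))) ` ({0..1} \<times> Za) \<subseteq> - {0}" using nz by force
  qed (auto simp: Pm0)
  have hom: "homotopic_with_canon (\<lambda>x. True) Za (- {0}) H f"
    by (rule homotopic_with_trans[OF h1 h2])
  have anr: "ANR (- {0::real^'n})" by (rule open_imp_ANR) (simp add: open_Compl)
  have Hfun: "H \<in> PP \<rightarrow> - {0}" using H(2) by auto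
  obtain g' where g': "homotopic_with_canon (\<lambda>x. True) PP (- {0}) H g'" "continuous_on PP g'" "g' ` PP \<subseteq> - {0}" "\<And>x. x \<in> Za \<Longrightarrow> g' x = f x"
    by (rule Borsuk_homotopy_extension_homotopic[OF ZaP disjI2[OF anr] H(1) Hfun hom]) blast
  then show ?thesis by blast
qed

end

context cor35 begin

lemma main:
  "(\<exists>F. continuous_on {x \<in> polyhedron K. N (f x) \<le> alpha} F \<and>
              F ` {x \<in> polyhedron K. N (f x) \<le> alpha} \<subseteq> - {0} \<and>
              (\<forall>x \<in> {x \<in> polyhedron K. N (f x) = alpha}. F x = f x))
     \<longleftrightarrow>
         (\<exists>G. continuous_on {x \<in> polyhedron K. chi x \<le> 1/2} G \<and>
              G ` {x \<in> polyhedron K. chi x \<le> 1/2} \<subseteq> - {0} \<and>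
              (\<forall>x \<in> {x \<in> polyhedron K. chi x = 1/2}. G x = f x))"
proof -
  define Z1 where "Z1 = {x \<in> PP. alpha \<le> N (f x)}"
  define Z2 where "Z2 = {x \<in> PP. 1/2 \<le> chi x}"
  have E1: "(\<exists>F. continuous_on {x \<in> polyhedron K. N (f x) \<le> alpha} F \<and>
              F ` {x \<in> polyhedron K. N (f x) \<le> alpha} \<subseteq> - {0} \<and>
              (\<forall>x \<in> {x \<in> polyhedron K. N (f x) = alpha}. F x = f x))
    \<longleftrightarrow> (\<exists>H. continuous_on PP H \<and> H ` PP \<subseteq> - {0} \<and> (\<forall>x\<in>Z1. H x = f x))"
    unfolding Z1_def
    by (rule gen_ext[OF Nf_cont f_cont]) (use alpha Nb(1) in force)
  have E2: "(\<exists>G. continuous_on {x \<in> polyhedron K. chi x \<le> 1/2} G \<and>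
              G ` {x \<in> polyhedron K. chi x \<le> 1/2} \<subseteq> - {0} \<and>
              (\<forall>x \<in> {x \<in> polyhedron K. chi x = 1/2}. G x = f x))
    \<longleftrightarrow> (\<exists>H. continuous_on PP H \<and> H ` PP \<subseteq> - {0} \<and> (\<forall>x\<in>Z2. H x = f x))"
    unfolding Z2_def
  proof (rule gen_ext[OF chi_cont f_cont])
    show "\<forall>x\<in>PP. 1 / 2 \<le> chi x \<longrightarrow> f x \<noteq> 0"
    proof (intro ballI impI)
      fix x assume x: "x \<in> PP" "1/2 \<le> chi x"
      then have "sL x < 1" using gF(2)[OF x(1)] by simp
      then show "f x \<noteq> 0" using gF(3)[OF x(1), of 0] by (simp add: Pm0)
    qed
  qed
  have c1: "closedin (top_of_set PP) Z1"
  proof -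
    have "closedin (top_of_set PP) (PP \<inter> (\<lambda>x. N (f x)) -` {alpha..})"
      by (rule continuous_closedin_preimage[OF Nf_cont]) simp
    moreover have "PP \<inter> (\<lambda>x. N (f x)) -` {alpha..} = Z1" unfolding Z1_def by auto
    ultimately show ?thesis by simp
  qed
  have c2: "closedin (top_of_set PP) Z2"
  proof -
    have "closedin (top_of_set PP) (PP \<inter> chi -` {1/2..})"
      by (rule continuous_closedin_preimage[OF chi_cont]) simp
    moreover have "PP \<inter> chi -` {1/2..} = Z2" unfolding Z2_def by auto
    ultimately show ?thesis by simp
  qed
  have s1: "\<forall>x\<in>Z1. sL x < 1" unfolding Z1_def using gF(1) by blast
  have s2: "\<forall>x\<in>Z2. sL x < 1" unfolding Z2_def using gF(2) by fastforce
  have "(\<exists>H. continuous_on PP H \<and> H ` PP \<subseteq> - {0} \<and> (\<forall>x\<in>Z1. H x = f x))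
    \<longleftrightarrow> (\<exists>H. continuous_on PP H \<and> H ` PP \<subseteq> - {0} \<and> (\<forall>x\<in>Z2. H x = f x))"
  proof
    assume "\<exists>H. continuous_on PP H \<and> H ` PP \<subseteq> - {0} \<and> (\<forall>x\<in>Z1. H x = f x)"
    then obtain H where H: "continuous_on PP H" "H ` PP \<subseteq> - {0}" "\<forall>x\<in>Z1. H x = f x" by blast
    show "\<exists>H. continuous_on PP H \<and> H ` PP \<subseteq> - {0} \<and> (\<forall>x\<in>Z2. H x = f x)"
    proof (rule transfer[OF c2 s2 _ _ H])
      show "\<forall>x\<in>Z2. \<forall>t\<in>{0..1}. f (Pm t x) \<noteq> 0" using s2 gF(3) unfolding Z2_def by auto
      show "\<forall>x\<in>Z2. Pm 1 x \<in> Z1" using s2 gF(4,7) unfolding Z2_def Z1_def by auto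
    qed
  next
    assume "\<exists>H. continuous_on PP H \<and> H ` PP \<subseteq> - {0} \<and> (\<forall>x\<in>Z2. H x = f x)"
    then obtain H where H: "continuous_on PP H" "H ` PP \<subseteq> - {0}" "\<forall>x\<in>Z2. H x = f x" by blast
    show "\<exists>H. continuous_on PP H \<and> H ` PP \<subseteq> - {0} \<and> (\<forall>x\<in>Z1. H x = f x)"
    proof (rule transfer[OF c1 s1 _ _ H])
      show "\<forall>x\<in>Z1. \<forall>t\<in>{0..1}. f (Pm t x) \<noteq> 0"
      proof (intro ballI)
        fix x and t :: real assume x: "x \<in> Z1" and t: "t \<in> {0..1}"
        then have "N (f (Pm t x)) \<ge> alpha" using gF(6) s1 unfolding Z1_def by auto
        then show "f (Pm t x) \<noteq> 0" using alpha Nb(1) by force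
      qed
      show "\<forall>x\<in>Z1. Pm 1 x \<in> Z2" using s1 gF(5,7) unfolding Z2_def Z1_def by auto
    qed
  qed
  then show ?thesis using E1 E2 by simp
qed

end

theorem corollary3p5:
  fixes K :: "'a::euclidean_space set set"
    and N :: "real^'n \<Rightarrow> real"
    and f :: "'a \<Rightarrow> real^'n"
    and chi :: "'a \<Rightarrow> real"
    and alpha :: real
  assumes K: "simplicial_complex K"
    and N: "is_norm N"
    and f_pl: "piecewise_linear_on K f"
    and f_min: "\<forall>S\<in>K. S \<noteq> {} \<longrightarrow>
                 (\<exists>v. v extreme_point_of S \<and> (\<forall>x\<in>S. N (f v) \<le> N (f x)))"
    and f_max: "\<forall>S\<in>K. S \<noteq> {} \<longrightarrow>
                 (\<exists>v. v extreme_point_of S \<and> (\<forall>x\<in>S. N (f x) \<le> N (f v)))"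
    and alpha: "alpha > 0"
    and chi_pl: "piecewise_linear_on K chi"
    and chi_vert: "\<forall>v\<in>cvertices K.
                 chi v = (if N (f v) < alpha then 0 else if N (f v) = alpha then 1/2 else 1)"
  shows "(\<exists>F. continuous_on {x \<in> polyhedron K. N (f x) \<le> alpha} F \<and>
              F ` {x \<in> polyhedron K. N (f x) \<le> alpha} \<subseteq> - {0} \<and>
              (\<forall>x \<in> {x \<in> polyhedron K. N (f x) = alpha}. F x = f x))
     \<longleftrightarrow>
         (\<exists>G. continuous_on {x \<in> polyhedron K. chi x \<le> 1/2} G \<and>
              G ` {x \<in> polyhedron K. chi x \<le> 1/2} \<subseteq> - {0} \<and>
              (\<forall>x \<in> {x \<in> polyhedron K. chi x = 1/2}. G x = f x))"
proof -
  interpret cor35 K N f chi alpha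
    by (unfold_locales) (rule K N f_pl f_min alpha chi_pl chi_vert)+
  show ?thesis by (rule main)
qed

end
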